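(* Let $n\ge3$. Let $\mathcal M=(G,\{1\},\{1\},\emptyset)$ be a strongly connected linear compartmental model with $n-1$ compartments, input and output in compartment $1$, and no leaks. Let $H$ be obtained from $G$ by adding a leaf edge at compartment $1$ (new compartment $n$, edges $1\to n$ with parameter $a_{n1}$ and $n\to1$ with parameter $a_{1n}$), and let $\mathcal M'=(H,\{n\},\{1\},\emptyset)$. Let $A$ and $A'$ be the compartmental matrices of $\mathcal M$ and $\mathcal M'$. Define $c_0,\dots,c_{n-1}$ and $d_0,\dots,d_{n-2}$ by $\det(\lambda I-A)=\sum_{i=0}^{n-1}c_i\lambda^i$ and $\det((\lambda I-A)^{1,1})=\sum_{i=0}^{n-2}d_i\lambda^i$ (so $c_{n-1}=d_{n-2}=1$), and define $c^*_0,\dots,c^*_{n-1}$ and $d^*_0,\dots,d^*_{n-2}$ by $\det(\lambda I-A')=\lambda^n+\sum_{i=0}^{n-1}c^*_i\lambda^i$ and $\det((\lambda I-A')^{n,1})=\sum_{i=0}^{n-2}d^*_i\lambda^i$. Then: (1) (i) $d^*_i=(-1)^{n-1}a_{1n}d_i$ for $i=0,\dots,n-2$; (ii) $c^*_i=c_{i-1}+a_{1n}c_i+a_{n1}d_{i-1}$ for $i=1,\dots,n-1$; (iii) $c^*_0=c_0=0$. (2) If $c_{\mathcal M}$ and $c_{\mathcal M'}$ denote the coefficient maps of $\mathcal M$ and $\mathcal M'$, then the rank of the Jacobian matrix of $c_{\mathcal M'}$ at a generic point equals $2$ plus the rank of the Jacobian matrix of $c_{\mathcal M}$ at a generic point.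
   Context: A linear compartmental model $\mathcal M=(G,In,Out,Leak)$ consists of a finite directed graph $G=(V_G,E_G)$ without multi-edges, compartments $V_G=\{1,\dots,n\}$, and subsets $In,Out,Leak\subseteq V_G$; edge $j\to i$ carries parameter $a_{ij}$ and each $i\in Leak$ carries $a_{0i}$. The compartmental matrix $A$ has $A_{ii}=-\sum_{k:\,i\to k\in E_G}a_{ki}$ (minus $a_{0i}$ if $i\in Leak$), $A_{ij}=a_{ij}$ if $j\to i\in E_G$, $0$ otherwise. $B^{i,j}$ denotes $B$ with row $i$ and column $j$ removed. The input-output equations are $\det(\partial I-A)y_i=\sum_{j\in In}(-1)^{i+j}\det((\partial I-A)^{j,i})u_j$ ($i\in Out$), $\partial I$ the diagonal matrix of $d/dt$'s; the coefficient map sends the parameter vector in $\mathbb R^{|E_G|+|Leak|}$ to the vector of all non-constant coefficients (polynomials in the parameters) of these equations. Adding a leaf edge at $i$ to a graph with vertex set $\{1,\dots,n-1\}$ gives the graph with vertex set $\{1,\dots,n\}$ and edge set $E_G\cup\{i\to n,n\to i\}$. *)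

theory Defs
  imports "Jordan_Normal_Form.Char_Poly" "Jordan_Normal_Form.DL_Rank"
          "HOL-Library.Product_Lexorder" "HOL-Analysis.Derivative"
begin

text \<open>Compartments are the natural numbers 1..n.  A directed edge
  j -> i is the pair (j, i); the edge set E is a set of such pairs.  A parameter
  vector is a function p :: nat * nat => real: the parameter a_ij of the edge
  j -> i is p (j, i), and the leak parameter a_0i of compartment i is p (i, 0)
  (think of a leak as an edge i -> 0).  Only the values of p on
  lcm_params E Leak matter.\<close>

type_synonym params = "nat \<times> nat \<Rightarrow> real"

definition lcm_graph :: "nat \<Rightarrow> (nat \<times> nat) set \<Rightarrow> bool" where
  "lcm_graph n E \<longleftrightarrow> E \<subseteq> {1..n} \<times> {1..n} \<and> (\<forall>i. (i, i) \<notin> E)"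

definition strongly_connected :: "nat \<Rightarrow> (nat \<times> nat) set \<Rightarrow> bool" where
  "strongly_connected n E \<longleftrightarrow> (\<forall>i\<in>{1..n}. \<forall>j\<in>{1..n}. (i, j) \<in> E\<^sup>*)"

definition add_leaf_edge :: "nat \<Rightarrow> (nat \<times> nat) set \<Rightarrow> nat \<Rightarrow> (nat \<times> nat) set" where
  "add_leaf_edge n E i = E \<union> {(i, n), (n, i)}"

definition lcm_params :: "(nat \<times> nat) set \<Rightarrow> nat set \<Rightarrow> (nat \<times> nat) set" where
  "lcm_params E Leak = E \<union> {(i, 0) | i. i \<in> Leak}"

text \<open>The compartmental matrix A (n x n; entry (i,j) of the paper is the
  JNF entry (i-1, j-1)).\<close>
definition comp_matrix :: "nat \<Rightarrow> (nat \<times> nat) set \<Rightarrow> nat set \<Rightarrow> params \<Rightarrow> real mat" where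
  "comp_matrix n E Leak p = Matrix.mat n n (\<lambda>(r, c).
     let i = Suc r; j = Suc c in
     if i = j then - (\<Sum>k\<in>{k. (i, k) \<in> E}. p (i, k)) - (if i \<in> Leak then p (i, 0) else 0)
     else if (j, i) \<in> E then p (j, i) else 0)"

text \<open>det(lambda I - A) is char_poly A; (lambda I - A)^{j,i} (row j and
  column i removed) is mat_delete (char_poly_matrix A) (j-1) (i-1).\<close>
definition minor_poly :: "real mat \<Rightarrow> nat \<Rightarrow> nat \<Rightarrow> real poly" where
  "minor_poly A j i = det (mat_delete (char_poly_matrix A) (j - 1) (i - 1))"

text \<open>Key (i, 0, k): coefficient of
  the k-th derivative of y_i in the equation for output i; key (i, j, k) with
  j >= 1: coefficient of the k-th derivative of u_j in the equation for output i.\<close>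
definition io_coef :: "nat \<Rightarrow> (nat \<times> nat) set \<Rightarrow> nat set \<Rightarrow> nat \<times> nat \<times> nat \<Rightarrow> params \<Rightarrow> real" where
  "io_coef n E Leak key p = (case key of (i, j, k) \<Rightarrow>
     if j = 0 then coeff (char_poly (comp_matrix n E Leak p)) k
     else (-1) ^ (i + j) * coeff (minor_poly (comp_matrix n E Leak p) j i) k)"

definition io_keys :: "nat \<Rightarrow> nat set \<Rightarrow> nat set \<Rightarrow> (nat \<times> nat \<times> nat) set" where
  "io_keys n In Out = {(i, 0, k) | i k. i \<in> Out \<and> k \<le> n} \<union>
                      {(i, j, k) | i j k. i \<in> Out \<and> j \<in> In \<and> k < n}"

definition nonconst_keys :: "nat \<Rightarrow> (nat \<times> nat) set \<Rightarrow> nat set \<Rightarrow> nat set \<Rightarrow> nat set \<Rightarrow> (nat \<times> nat \<times> nat) set" where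
  "nonconst_keys n E In Out Leak =
     {key \<in> io_keys n In Out. \<exists>p q. io_coef n E Leak key p \<noteq> io_coef n E Leak key q}"

definition coef_jacobian :: "nat \<Rightarrow> (nat \<times> nat) set \<Rightarrow> nat set \<Rightarrow> nat set \<Rightarrow> nat set \<Rightarrow> params \<Rightarrow> real mat" where
  "coef_jacobian n E In Out Leak p =
     (let ks = sorted_list_of_set (nonconst_keys n E In Out Leak);
          es = sorted_list_of_set (lcm_params E Leak)
      in Matrix.mat (length ks) (length es) (\<lambda>(r, c).
           deriv (\<lambda>t. io_coef n E Leak (ks ! r) (p (es ! c := t))) (p (es ! c))))"

definition jacobian_rank :: "nat \<Rightarrow> (nat \<times> nat) set \<Rightarrow> nat set \<Rightarrow> nat set \<Rightarrow> nat set \<Rightarrow> params \<Rightarrow> nat" where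
  "jacobian_rank n E In Out Leak p =
     vec_space.rank (card (nonconst_keys n E In Out Leak)) (coef_jacobian n E In Out Leak p)"

text \<open>Rank of the Jacobian at a generic point = maximal rank over all parameter
  points (the coefficients are polynomial in the parameters).\<close>
definition generic_jacobian_rank :: "nat \<Rightarrow> (nat \<times> nat) set \<Rightarrow> nat set \<Rightarrow> nat set \<Rightarrow> nat set \<Rightarrow> nat" where
  "generic_jacobian_rank n E In Out Leak = Max (range (jacobian_rank n E In Out Leak))"

end

theory Submission
  imports Defs
begin


definition indep :: "'k set \<Rightarrow> 'l set \<Rightarrow> ('l \<Rightarrow> 'k \<Rightarrow> real) \<Rightarrow> bool" where
  "indep K I v \<longleftrightarrow> (\<forall>c. (\<forall>k\<in>K. (\<Sum>l\<in>I. c l * v l k) = 0) \<longrightarrow> (\<forall>l\<in>I. c l = 0))"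

definition frank :: "'k set \<Rightarrow> 'l set \<Rightarrow> ('l \<Rightarrow> 'k \<Rightarrow> real) \<Rightarrow> nat" where
  "frank K L v = Max {card I | I. I \<subseteq> L \<and> indep K I v}"

lemma (in vec_space) lin_indpt_iff_concrete:
  assumes T: "finite T" "T \<subseteq> carrier_vec n"
  shows "lin_indpt T \<longleftrightarrow> (\<forall>a. (\<forall>i<n. (\<Sum>x\<in>T. a x * x $ i) = 0) \<longrightarrow> (\<forall>x\<in>T. a x = 0))"
proof
  assume li: "lin_indpt T"
  show "\<forall>a. (\<forall>i<n. (\<Sum>x\<in>T. a x * x $ i) = 0) \<longrightarrow> (\<forall>x\<in>T. a x = 0)"
  proof (intro allI impI ballI, rule ccontr)
    fix a x assume s: "\<forall>i<n. (\<Sum>x\<in>T. a x * x $ i) = 0" and x: "x \<in> T" and ax: "a x \<noteq> 0"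
    have "lincomb a T = 0\<^sub>v n"
      by (rule eq_vecI, auto simp: lincomb_index[OF _ T(2)] s lincomb_dim[OF T])
    then have "lin_dep T"
      using lin_dep_crit[OF T(1) subset_refl _ x] ax by auto
    with li show False by simp
  qed
next
  assume h: "\<forall>a. (\<forall>i<n. (\<Sum>x\<in>T. a x * x $ i) = 0) \<longrightarrow> (\<forall>x\<in>T. a x = 0)"
  show "lin_indpt T"
  proof
    assume "lin_dep T"
    then obtain a w where a: "lincomb a T = 0\<^sub>v n" "w \<in> T" "a w \<noteq> 0"
      using finite_lin_dep[OF T(1)] T(2) by auto
    have "\<forall>i<n. (\<Sum>x\<in>T. a x * x $ i) = 0"
    proof (intro allI impI)
      fix i assume i: "i < n"
      have "lincomb a T $ i = 0" using a(1) i by simp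
      then show "(\<Sum>x\<in>T. a x * x $ i) = 0" using lincomb_index[OF i T(2)] by simp
    qed
    with h a show False by auto
  qed
qed


lemma frank_finite_set:
  assumes "finite L"
  shows "finite {card I | I. I \<subseteq> L \<and> indep K I v}"
proof -
  have "{card I | I. I \<subseteq> L \<and> indep K I v} \<subseteq> card ` Pow L" by auto
  then show ?thesis using assms finite_subset by blast
qed

lemma indep_empty[simp]: "indep K {} v" unfolding indep_def by simp

lemma frank_ge:
  assumes "finite L" "I \<subseteq> L" "indep K I v"
  shows "card I \<le> frank K L v"
  unfolding frank_def using assms frank_finite_set[OF assms(1)]
  by (intro Max_ge) auto

lemma frank_obtain:
  assumes "finite L"
  obtains I where "I \<subseteq> L" "indep K I v" "card I = frank K L v"
proof -
  have "frank K L v \<in> {card I | I. I \<subseteq> L \<and> indep K I v}"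
    unfolding frank_def using frank_finite_set[OF assms(1)]
    by (intro Max_in) auto
  then show ?thesis using that by auto
qed

lemma rank_bridge:
  fixes v :: "'l \<Rightarrow> 'k \<Rightarrow> real"
  assumes dk: "distinct ks" and de: "distinct es"
  shows "vec_space.rank (length ks) (Matrix.mat (length ks) (length es) (\<lambda>(r,c). v (es!c) (ks!r)))
         = frank (set ks) (set es) v"
proof -
  define m where "m = length ks"
  define A where "A = Matrix.mat m (length es) (\<lambda>(r,c). v (es!c) (ks!r))"
  define \<psi> where "\<psi> = (\<lambda>l. Matrix.vec m (\<lambda>r. v l (ks!r)))"
  interpret V: vec_space "TYPE(real)" m .
  have Ac: "A \<in> carrier_mat m (length es)" unfolding A_def by simp
  have colsA: "set (cols A) = \<psi> ` set es"
  proof -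
    have "set (cols A) = (\<lambda>j. col A j) ` {..<length es}"
      unfolding cols_def A_def by auto
    also have "\<dots> = (\<lambda>j. \<psi> (es ! j)) ` {..<length es}"
      unfolding A_def \<psi>_def by (intro image_cong refl) auto
    also have "\<dots> = \<psi> ` set es"
      by (auto simp: in_set_conv_nth image_iff) (metis nth_mem)
    finally show ?thesis .
  qed
  have psi_carr: "\<psi> ` X \<subseteq> carrier_vec m" for X unfolding \<psi>_def by auto
  have key: "indep (set ks) I v \<longleftrightarrow> inj_on \<psi> I \<and> V.lin_indpt (\<psi> ` I)" if I: "finite I" for I
  proof
    assume ind: "indep (set ks) I v"
    have inj: "inj_on \<psi> I"
    proof (rule inj_onI, rule ccontr)
      fix l1 l2 assume l: "l1 \<in> I" "l2 \<in> I" "\<psi> l1 = \<psi> l2" "l1 \<noteq> l2"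
      define c where "c = (\<lambda>l. if l = l1 then (1::real) else if l = l2 then -1 else 0)"
      have "\<forall>k\<in>set ks. (\<Sum>l\<in>I. c l * v l k) = 0"
      proof
        fix k assume "k \<in> set ks"
        then obtain r where r: "r < m" "k = ks ! r" unfolding m_def by (auto simp: in_set_conv_nth)
        have eq: "v l1 k = v l2 k" using arg_cong[OF l(3), of "\<lambda>x. x $ r"] r unfolding \<psi>_def by simp
        have "(\<Sum>l\<in>I. c l * v l k) = (\<Sum>l\<in>{l1,l2}. c l * v l k)"
          using l I by (intro sum.mono_neutral_right) (auto simp: c_def)
        also have "\<dots> = 0" using l(4) eq by (simp add: c_def)
        finally show "(\<Sum>l\<in>I. c l * v l k) = 0" .
      qed
      with ind l show False unfolding indep_def c_def by force
    qed
    have "\<forall>a. (\<forall>i<m. (\<Sum>x\<in>\<psi>`I. a x * x $ i) = 0) \<longrightarrow> (\<forall>x\<in>\<psi>`I. a x = 0)"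
    proof (intro allI impI)
      fix a assume h: "\<forall>i<m. (\<Sum>x\<in>\<psi>`I. a x * x $ i) = 0"
      have "\<forall>k\<in>set ks. (\<Sum>l\<in>I. (a \<circ> \<psi>) l * v l k) = 0"
      proof
        fix k assume "k \<in> set ks"
        then obtain r where r: "r < m" "k = ks ! r" unfolding m_def by (auto simp: in_set_conv_nth)
        have "(\<Sum>l\<in>I. (a \<circ> \<psi>) l * v l k) = (\<Sum>l\<in>I. a (\<psi> l) * \<psi> l $ r)"
          using r unfolding \<psi>_def by simp
        also have "\<dots> = (\<Sum>x\<in>\<psi>`I. a x * x $ r)" using sum.reindex[OF inj, of "\<lambda>x. a x * x $ r"] by simp
        finally show "(\<Sum>l\<in>I. (a \<circ> \<psi>) l * v l k) = 0" using h r by simp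
      qed
      then show "\<forall>x\<in>\<psi>`I. a x = 0" using ind unfolding indep_def by auto
    qed
    with inj show "inj_on \<psi> I \<and> V.lin_indpt (\<psi> ` I)"
      using V.lin_indpt_iff_concrete[of "\<psi> ` I"] I psi_carr by auto
  next
    assume h: "inj_on \<psi> I \<and> V.lin_indpt (\<psi> ` I)"
    then have inj: "inj_on \<psi> I" and li: "V.lin_indpt (\<psi> ` I)" by auto
    have conc: "\<forall>a. (\<forall>i<m. (\<Sum>x\<in>\<psi>`I. a x * x $ i) = 0) \<longrightarrow> (\<forall>x\<in>\<psi>`I. a x = 0)"
      using V.lin_indpt_iff_concrete[of "\<psi> ` I"] I psi_carr li by auto
    show "indep (set ks) I v" unfolding indep_def
    proof (intro allI impI ballI)
      fix c l assume s: "\<forall>k\<in>set ks. (\<Sum>l\<in>I. c l * v l k) = 0" and l: "l \<in> I"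
      define a where "a = (\<lambda>x. c (inv_into I \<psi> x))"
      have "\<forall>i<m. (\<Sum>x\<in>\<psi>`I. a x * x $ i) = 0"
      proof (intro allI impI)
        fix i assume i: "i < m"
        have "(\<Sum>x\<in>\<psi>`I. a x * x $ i) = (\<Sum>l\<in>I. a (\<psi> l) * \<psi> l $ i)"
          using sum.reindex[OF inj, of "\<lambda>x. a x * x $ i"] by simp
        also have "\<dots> = (\<Sum>l\<in>I. c l * v l (ks ! i))"
        proof (intro sum.cong refl)
          fix l assume l: "l \<in> I"
          have "inv_into I \<psi> (\<psi> l) = l" by (rule inv_into_f_f[OF inj l])
          then show "a (\<psi> l) * \<psi> l $ i = c l * v l (ks ! i)" unfolding a_def using i by (simp add: \<psi>_def)
        qed
        also have "\<dots> = 0" using s i unfolding m_def by auto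
        finally show "(\<Sum>x\<in>\<psi>`I. a x * x $ i) = 0" .
      qed
      then have "a (\<psi> l) = 0" using conc l by auto
      then show "c l = 0" using inj l unfolding a_def by simp
    qed
  qed
  obtain S where S: "maximal S (\<lambda>T. T \<subseteq> set (cols A) \<and> V.lin_indpt T)"
    using maximal_exists[of "(\<lambda>T. T \<subseteq> set (cols A) \<and> V.lin_indpt T)" "card (set (cols A))" "{}"]
    by (meson List.finite_set card_mono empty_iff empty_subsetI V.finite_lin_indpt2 rev_finite_subset)
  have rk: "V.rank A = card S" using V.rank_card_indpt[OF Ac S] .
  have le1: "V.rank A \<le> frank (set ks) (set es) v"
  proof -
    have Ssub: "S \<subseteq> \<psi> ` set es" and Sli: "V.lin_indpt S" using S colsA unfolding maximal_def by auto
    define I where "I = inv_into (set es) \<psi> ` S"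
    have fx: "\<psi> (inv_into (set es) \<psi> x) = x" if "x \<in> S" for x using that Ssub by (auto simp: f_inv_into_f)
    have IS: "\<psi> ` I = S" unfolding I_def image_image using fx by simp
    have Isub: "I \<subseteq> set es" unfolding I_def using Ssub by (auto intro: inv_into_into)
    have inj: "inj_on \<psi> I" unfolding I_def using Ssub
      by (intro inj_onI) (auto simp: f_inv_into_f subset_iff)
    have "indep (set ks) I v" using key[of I] inj IS Sli finite_subset[OF Isub] by auto
    then have "card I \<le> frank (set ks) (set es) v" using frank_ge[OF _ Isub] by auto
    moreover have "card I = card S" using card_image[OF inj] IS by simp
    ultimately show ?thesis using rk by simp
  qed
  have le2: "frank (set ks) (set es) v \<le> V.rank A"
  proof -
    obtain I where I: "I \<subseteq> set es" "indep (set ks) I v" "card I = frank (set ks) (set es) v"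
      using frank_obtain[of "set es" "set ks" v] by auto
    have fI: "finite I" using I(1) finite_subset by blast
    have "inj_on \<psi> I" "V.lin_indpt (\<psi> ` I)" using key[OF fI] I by auto
    moreover have "\<psi> ` I \<subseteq> set (cols A)" using colsA I by auto
    ultimately have "card (\<psi> ` I) \<le> V.rank A" using V.rank_ge_card_indpt[OF Ac] by auto
    then show ?thesis using card_image[OF \<open>inj_on \<psi> I\<close>] I by simp
  qed
  show ?thesis using le1 le2 unfolding A_def m_def by simp
qed


lemma indep_mono:
  assumes "indep K I v" "J \<subseteq> I" "finite I"
  shows "indep K J v"
  unfolding indep_def
proof (intro allI impI ballI)
  fix c l assume s: "\<forall>k\<in>K. (\<Sum>l\<in>J. c l * v l k) = 0" and l: "l \<in> J"
  define c' where "c' = (\<lambda>l. if l \<in> J then c l else 0)"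
  have "\<forall>k\<in>K. (\<Sum>l\<in>I. c' l * v l k) = 0"
  proof
    fix k assume k: "k \<in> K"
    have "(\<Sum>l\<in>I. c' l * v l k) = (\<Sum>l\<in>J. c' l * v l k)"
      using assms by (intro sum.mono_neutral_right) (auto simp: c'_def)
    also have "\<dots> = (\<Sum>l\<in>J. c l * v l k)" by (simp add: c'_def)
    finally show "(\<Sum>l\<in>I. c' l * v l k) = 0" using s k by simp
  qed
  then have "c' l = 0" using assms(1) l assms(2) unfolding indep_def by blast
  then show "c l = 0" using l by (simp add: c'_def)
qed

lemma frank_upper:
  assumes L: "finite L" and X: "finite X"
    and tr: "\<And>I c. I \<subseteq> L \<Longrightarrow> (\<forall>k\<in>K. (\<Sum>l\<in>I. c l * v l k) = 0) \<Longrightarrow> (\<forall>k\<in>K'. (\<Sum>l\<in>I. c l * w l k) = 0)"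
  shows "frank K' (L \<union> X) w \<le> frank K L v + card X"
proof -
  obtain I' where I': "I' \<subseteq> L \<union> X" "indep K' I' w" "card I' = frank K' (L \<union> X) w"
    using frank_obtain[of "L \<union> X" K' w] L X by auto
  define I where "I = I' - X"
  have fI': "finite I'" using I'(1) L X finite_subset by blast
  have IL: "I \<subseteq> L" using I'(1) unfolding I_def by auto
  have "indep K' I w" using indep_mono[OF I'(2) _ fI'] unfolding I_def by auto
  have "indep K I v" unfolding indep_def
  proof (intro allI impI)
    fix c assume "\<forall>k\<in>K. (\<Sum>l\<in>I. c l * v l k) = 0"
    then have "\<forall>k\<in>K'. (\<Sum>l\<in>I. c l * w l k) = 0" using tr[OF IL] by blast
    then show "\<forall>l\<in>I. c l = 0" using \<open>indep K' I w\<close> unfolding indep_def by blast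
  qed
  then have "card I \<le> frank K L v" using frank_ge[OF L IL] by blast
  moreover have "card I' \<le> card I + card X"
  proof -
    have "I' \<subseteq> I \<union> X" unfolding I_def by auto
    then have "card I' \<le> card (I \<union> X)" using fI' X I_def by (intro card_mono) auto
    also have "\<dots> \<le> card I + card X" by (rule card_Un_le)
    finally show ?thesis .
  qed
  ultimately show ?thesis using I'(3) by simp
qed

lemma frank_lower:
  assumes L: "finite L" and xy: "x \<notin> L" "y \<notin> L" "x \<noteq> y" and IL: "I \<subseteq> L" and ind: "indep K I v"
    and cond: "\<And>c a b. (\<forall>k\<in>K'. (\<Sum>l\<in>I. c l * w l k) + a * w x k + b * w y k = 0)
       \<Longrightarrow> a = 0 \<and> b = 0 \<and> (\<forall>k\<in>K. (\<Sum>l\<in>I. c l * v l k) = 0)"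
  shows "card I + 2 \<le> frank K' (L \<union> {x, y}) w"
proof -
  define J where "J = insert x (insert y I)"
  have fI: "finite I" using IL L finite_subset by blast
  have xI: "x \<notin> I" "y \<notin> I" using xy IL by auto
  have cJ: "card J = card I + 2" unfolding J_def using fI xI xy by simp
  have JL: "J \<subseteq> L \<union> {x, y}" unfolding J_def using IL by auto
  have "indep K' J w" unfolding indep_def
  proof (intro allI impI)
    fix c assume s: "\<forall>k\<in>K'. (\<Sum>l\<in>J. c l * w l k) = 0"
    have "\<forall>k\<in>K'. (\<Sum>l\<in>I. c l * w l k) + c x * w x k + c y * w y k = 0"
    proof
      fix k assume "k \<in> K'"
      then have "(\<Sum>l\<in>J. c l * w l k) = 0" using s by blast
      moreover have "(\<Sum>l\<in>J. c l * w l k) = c x * w x k + (c y * w y k + (\<Sum>l\<in>I. c l * w l k))"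
        unfolding J_def using fI xI xy by simp
      ultimately show "(\<Sum>l\<in>I. c l * w l k) + c x * w x k + c y * w y k = 0" by simp
    qed
    from cond[OF this] have "c x = 0" "c y = 0" "\<forall>k\<in>K. (\<Sum>l\<in>I. c l * v l k) = 0" by auto
    then show "\<forall>l\<in>J. c l = 0" using ind unfolding indep_def J_def by auto
  qed
  then show ?thesis using frank_ge[OF _ JL] L cJ by simp
qed

lemma frank_le_card: "finite L \<Longrightarrow> frank K L v \<le> card L"
  using frank_obtain[of L K v] by (metis card_mono)

lemma frank_rows:
  assumes "K \<subseteq> K2" "\<And>l k. l \<in> L \<Longrightarrow> k \<in> K2 - K \<Longrightarrow> v l k = 0"
  shows "frank K L v = frank K2 L v"
proof -
  have "indep K I v = indep K2 I v" if "I \<subseteq> L" for I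
  proof -
    have "(\<Sum>l\<in>I. c l * v l k) = 0" if "k \<in> K2 - K" for c k
      using assms(2) \<open>I \<subseteq> L\<close> that by (intro sum.neutral) auto
    then show ?thesis unfolding indep_def using assms(1) by blast
  qed
  then have "{card I | I. I \<subseteq> L \<and> indep K I v} = {card I | I. I \<subseteq> L \<and> indep K2 I v}" by blast
  then show ?thesis unfolding frank_def by simp
qed




definition PF :: "(real \<Rightarrow> real) \<Rightarrow> bool" where
  "PF f \<longleftrightarrow> (\<exists>q. \<forall>t. f t = poly q t)"

lemma PF_const[simp, intro]: "PF (\<lambda>t. a)"
  unfolding PF_def by (rule exI[of _ "[:a:]"]) simp

lemma PF_id[simp, intro]: "PF (\<lambda>t. t)"
  unfolding PF_def by (rule exI[of _ "[:0,1:]"]) simp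

lemma PF_add[intro]: "PF f \<Longrightarrow> PF g \<Longrightarrow> PF (\<lambda>t. f t + g t)"
  proof - assume "PF f" "PF g" then obtain q r where "\<And>t. f t = poly q t" "\<And>t. g t = poly r t" unfolding PF_def by blast then show ?thesis unfolding PF_def by (intro exI[of _ "q + r"]) simp qed

lemma PF_mult[intro]: "PF f \<Longrightarrow> PF g \<Longrightarrow> PF (\<lambda>t. f t * g t)"
  proof - assume "PF f" "PF g" then obtain q r where "\<And>t. f t = poly q t" "\<And>t. g t = poly r t" unfolding PF_def by blast then show ?thesis unfolding PF_def by (intro exI[of _ "q * r"]) simp qed

lemma PF_uminus[intro]: "PF f \<Longrightarrow> PF (\<lambda>t. - f t)"
  proof - assume "PF f" then obtain q where "\<And>t. f t = poly q t" unfolding PF_def by blast then show ?thesis unfolding PF_def by (intro exI[of _ "- q"]) simp qed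

lemma PF_diff[intro]: "PF f \<Longrightarrow> PF g \<Longrightarrow> PF (\<lambda>t. f t - g t)"
  proof - assume "PF f" "PF g" then obtain q r where "\<And>t. f t = poly q t" "\<And>t. g t = poly r t" unfolding PF_def by blast then show ?thesis unfolding PF_def by (intro exI[of _ "q - r"]) simp qed

lemma PF_if[intro]: "PF f \<Longrightarrow> PF g \<Longrightarrow> PF (\<lambda>t. if b then f t else g t)"
  by (cases b) auto

lemma PF_sum[intro]: "(\<And>i. i \<in> S \<Longrightarrow> PF (f i)) \<Longrightarrow> PF (\<lambda>t. \<Sum>i\<in>S. f i t)"
proof (induction S rule: infinite_finite_induct)
  case (insert x F) then show ?case by (simp add: PF_add)
qed auto

lemma PF_deriv: assumes "PF f" shows "(f has_real_derivative deriv f x) (at x)"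
proof -
  obtain q where q: "\<And>t. f t = poly q t" using assms unfolding PF_def by auto
  have "f = poly q" using q by auto
  then have "(f has_real_derivative poly (pderiv q) x) (at x)" using poly_DERIV by simp
  then show ?thesis using DERIV_imp_deriv by metis
qed

definition PPF :: "(real \<Rightarrow> real poly) \<Rightarrow> bool" where
  "PPF F \<longleftrightarrow> (\<forall>k. PF (\<lambda>t. coeff (F t) k))"

lemma PPF_const[simp, intro]: "PPF (\<lambda>t. a)"
  unfolding PPF_def by auto

lemma PPF_add[intro]: "PPF f \<Longrightarrow> PPF g \<Longrightarrow> PPF (\<lambda>t. f t + g t)"
  unfolding PPF_def by (auto simp: coeff_add)

lemma PPF_uminus[intro]: "PPF f \<Longrightarrow> PPF (\<lambda>t. - f t)"
  unfolding PPF_def by auto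

lemma PPF_mult[intro]: "PPF f \<Longrightarrow> PPF g \<Longrightarrow> PPF (\<lambda>t. f t * g t)"
  unfolding PPF_def coeff_mult by (auto intro!: PF_sum PF_mult)

lemma PPF_sum[intro]: "(\<And>i. i \<in> S \<Longrightarrow> PPF (f i)) \<Longrightarrow> PPF (\<lambda>t. \<Sum>i\<in>S. f i t)"
proof (induction S rule: infinite_finite_induct)
  case (insert x F) then show ?case by (simp add: PPF_add)
qed auto

lemma PPF_prod[intro]: "(\<And>i. i \<in> S \<Longrightarrow> PPF (f i)) \<Longrightarrow> PPF (\<lambda>t. \<Prod>i\<in>S. f i t)"
proof (induction S rule: infinite_finite_induct)
  case (insert x F) then show ?case by (simp add: PPF_mult)
qed auto

lemma PPF_pconst[intro]: "PF f \<Longrightarrow> PPF (\<lambda>t. [: f t :])"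
  unfolding PPF_def proof (intro allI) fix k assume "PF f" then show "PF (\<lambda>t. coeff [: f t :] k)" by (cases k) (auto simp: coeff_pCons) qed

lemma PPF_det:
  assumes "\<And>t. M t \<in> carrier_mat m m"
    and "\<And>i j. i < m \<Longrightarrow> j < m \<Longrightarrow> PPF (\<lambda>t. M t $$ (i, j))"
  shows "PPF (\<lambda>t. det (M t))"
proof -
  have "PPF (\<lambda>t. \<Sum>p \<in> {p. p permutes {0..<m}}. signof p * (\<Prod>i = 0..<m. M t $$ (i, p i)))"
  proof (intro PPF_sum PPF_mult PPF_prod PPF_const)
    fix p i assume "p \<in> {p. p permutes {0..<m}}" "i \<in> {0..<m}"
    then show "PPF (\<lambda>t. M t $$ (i, p i))" using assms(2) by (auto simp: permutes_def)
  qed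
  then show ?thesis using det_def'[OF assms(1)] by simp
qed


lemma comp_matrix_carrier[simp]: "comp_matrix N E Leak p \<in> carrier_mat N N"
  unfolding comp_matrix_def by simp

lemma comp_matrix_dims[simp]: "dim_row (comp_matrix N E Leak p) = N" "dim_col (comp_matrix N E Leak p) = N"
  unfolding comp_matrix_def by simp_all

lemma cpm_index:
  assumes "A \<in> carrier_mat m m" "i < m" "j < m"
  shows "char_poly_matrix A $$ (i,j) = (if i = j then [:0,1:] else 0) + [:- A $$ (i,j):]"
  using assms unfolding char_poly_matrix_def by auto

lemma mat_delete_idx:
  assumes "i < dim_row A - 1" "j < dim_col A - 1"
  shows "mat_delete A a b $$ (i, j) = A $$ (if i < a then i else Suc i, if j < b then j else Suc j)"
  using assms unfolding mat_delete_def by simp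

lemma cpm_dims[simp]: "dim_row (char_poly_matrix A) = dim_row A" "dim_col (char_poly_matrix A) = dim_col A"
  unfolding char_poly_matrix_def by simp_all

lemma PF_upd: "PF (\<lambda>t. (p(l := t)) e)"
  by (cases "e = l") auto

lemma PF_comp_entry:
  assumes "r < N" "c < N"
  shows "PF (\<lambda>t. comp_matrix N E Leak (p(l := t)) $$ (r, c))"
  using assms unfolding comp_matrix_def Let_def
  by (auto intro!: PF_sum PF_diff PF_uminus PF_if PF_upd simp del: fun_upd_apply)

lemma PPF_cpm_entry:
  assumes "r < N" "c < N"
  shows "PPF (\<lambda>t. char_poly_matrix (comp_matrix N E Leak (p(l := t))) $$ (r, c))"
  unfolding cpm_index[OF comp_matrix_carrier assms]
  using PF_comp_entry[OF assms] by (intro PPF_add PPF_pconst PF_uminus) auto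

lemma PPF_char_poly: "PPF (\<lambda>t. char_poly (comp_matrix N E Leak (p(l := t))))"
  unfolding char_poly_def
  by (rule PPF_det[where m = N]) (auto intro: PPF_cpm_entry)

lemma PPF_minor_poly:
  "PPF (\<lambda>t. minor_poly (comp_matrix N E Leak (p(l := t))) a b)"
  unfolding minor_poly_def
proof (rule PPF_det[where m = "N - 1"])
  fix t show "mat_delete (char_poly_matrix (comp_matrix N E Leak (p(l := t)))) (a - 1) (b - 1) \<in> carrier_mat (N - 1) (N - 1)"
    by (rule mat_delete_carrier) simp
next
  fix i j assume ij: "i < N - 1" "j < N - 1"
  have eq: "mat_delete (char_poly_matrix (comp_matrix N E Leak (p(l := t)))) (a - 1) (b - 1) $$ (i, j)
    = char_poly_matrix (comp_matrix N E Leak (p(l := t))) $$ (if i < a - 1 then i else Suc i, if j < b - 1 then j else Suc j)" for t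
    using ij by (subst mat_delete_idx) auto
  show "PPF (\<lambda>t. mat_delete (char_poly_matrix (comp_matrix N E Leak (p(l := t)))) (a - 1) (b - 1) $$ (i, j))"
    unfolding eq using ij by (intro PPF_cpm_entry) auto
qed




locale leaf =
  fixes N :: nat and E :: "(nat \<times> nat) set" and p :: params
  assumes N2: "N \<ge> 2" and Esub: "E \<subseteq> {1..N} \<times> {1..N}"
begin

definition "H = E \<union> {(1, Suc N), (Suc N, 1)}"
definition "A = comp_matrix N E {} p"
definition "A' = comp_matrix (Suc N) H {} p"
definition "\<alpha> = p (Suc N, 1)"
definition "\<beta> = p (1, Suc N)"

lemma m1: "(-1::real poly)^k = [:(-1)^k:]"
proof -
  have "(-1::real poly) = [:-1:]" by (simp add: one_pCons)
  then show ?thesis by (simp add: poly_const_pow)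
qed

lemma finE: "finite {k. (i, k) \<in> E}"
proof -
  have "{k. (i, k) \<in> E} \<subseteq> {1..N}" using Esub by auto
  then show ?thesis using finite_subset by blast
qed

lemma notinE: "(i, Suc N) \<notin> E" "(Suc N, i) \<notin> E" using Esub by auto

lemma A_idx: "r < N \<Longrightarrow> c < N \<Longrightarrow> A $$ (r, c) =
   (if r = c then - (\<Sum>k\<in>{k. (Suc r, k) \<in> E}. p (Suc r, k)) else if (Suc c, Suc r) \<in> E then p (Suc c, Suc r) else 0)"
  unfolding A_def comp_matrix_def by simp

lemma A'_idx: "r < Suc N \<Longrightarrow> c < Suc N \<Longrightarrow> A' $$ (r, c) =
   (if r = c then - (\<Sum>k\<in>{k. (Suc r, k) \<in> H}. p (Suc r, k)) else if (Suc c, Suc r) \<in> H then p (Suc c, Suc r) else 0)"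
  unfolding A'_def comp_matrix_def by simp

lemma E1: "i < N \<Longrightarrow> j < N \<Longrightarrow> (i, j) \<noteq> (0, 0) \<Longrightarrow> A' $$ (i, j) = A $$ (i, j)"
proof -
  assume ij: "i < N" "j < N" "(i, j) \<noteq> (0, 0)"
  have s: "{k. (Suc i, k) \<in> H} = {k. (Suc i, k) \<in> E}" if "i = j" using that ij unfolding H_def by auto
  have o: "(Suc j, Suc i) \<in> H \<longleftrightarrow> (Suc j, Suc i) \<in> E" using ij unfolding H_def by auto
  show ?thesis
  proof (cases "i = j")
    case True then show ?thesis using ij s by (simp add: A_idx A'_idx)
  next
    case False then show ?thesis using ij by (simp add: A_idx A'_idx o)
  qed
qed

lemma E0: "A' $$ (0, 0) = A $$ (0, 0) - \<beta>"
proof -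
  have s: "{k. (Suc 0, k) \<in> H} = insert (Suc N) {k. (Suc 0, k) \<in> E}" unfolding H_def by auto
  have "Suc N \<notin> {k. (Suc 0, k) \<in> E}" using notinE by auto
  then show ?thesis using N2 by (simp add: A_idx A'_idx s finE \<beta>_def)
qed

lemma E2a: "A' $$ (N, 0) = \<beta>"
  using N2 by (simp add: A'_idx H_def \<beta>_def)

lemma E2b: "0 < j \<Longrightarrow> j < N \<Longrightarrow> A' $$ (N, j) = 0"
  by (simp add: A'_idx H_def notinE)

lemma E2c: "A' $$ (N, N) = - \<alpha>"
proof -
  have s: "{k. (Suc N, k) \<in> H} = {1}" unfolding H_def using notinE by auto
  show ?thesis by (simp add: A'_idx s \<alpha>_def)
qed

lemma E3a: "A' $$ (0, N) = \<alpha>"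
  using N2 by (simp add: A'_idx H_def \<alpha>_def)

lemma E3b: "0 < i \<Longrightarrow> i < N \<Longrightarrow> A' $$ (i, N) = 0"
  by (simp add: A'_idx H_def notinE)


abbreviation "CA \<equiv> char_poly_matrix A"
abbreviation "CA' \<equiv> char_poly_matrix A'"

lemma A_carr: "A \<in> carrier_mat N N" unfolding A_def by simp
lemma A'_carr: "A' \<in> carrier_mat (Suc N) (Suc N)" unfolding A'_def by simp
lemma CA_carr: "CA \<in> carrier_mat N N" using A_carr by simp
lemma CA'_carr: "CA' \<in> carrier_mat (Suc N) (Suc N)" using A'_carr by simp

lemma CA_idx: "r < N \<Longrightarrow> c < N \<Longrightarrow> CA $$ (r, c) = (if r = c then [:0,1:] else 0) + [:- A $$ (r, c):]"
  by (rule cpm_index[OF A_carr])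
lemma CA'_idx: "r < Suc N \<Longrightarrow> c < Suc N \<Longrightarrow> CA' $$ (r, c) = (if r = c then [:0,1:] else 0) + [:- A' $$ (r, c):]"
  by (rule cpm_index[OF A'_carr])

lemma CE1: "i < N \<Longrightarrow> j < N \<Longrightarrow> (i, j) \<noteq> (0, 0) \<Longrightarrow> CA' $$ (i, j) = CA $$ (i, j)"
  by (simp add: CA_idx CA'_idx E1)

lemma CE0: "CA' $$ (0, j) = CA $$ (0, j) + (if j = 0 then [:\<beta>:] else 0)" if "j < N"
proof (cases "j = 0")
  case True then show ?thesis using N2 by (simp add: CA_idx CA'_idx E0)
next
  case False then show ?thesis using that CE1[of 0 j] N2 by simp
qed

lemma minor11: "mat_delete CA 0 0 = char_poly_matrix (mat_delete A 0 0)"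
proof (rule eq_matI)
  show "dim_row (mat_delete CA 0 0) = dim_row (char_poly_matrix (mat_delete A 0 0))"
    "dim_col (mat_delete CA 0 0) = dim_col (char_poly_matrix (mat_delete A 0 0))"
    using A_carr by auto
  fix i j assume "i < dim_row (char_poly_matrix (mat_delete A 0 0))" "j < dim_col (char_poly_matrix (mat_delete A 0 0))"
  then have ij: "i < N - 1" "j < N - 1" using A_carr by auto
  have c: "mat_delete A 0 0 \<in> carrier_mat (N-1) (N-1)" using mat_delete_carrier[OF A_carr] .
  show "mat_delete CA 0 0 $$ (i, j) = char_poly_matrix (mat_delete A 0 0) $$ (i, j)"
    using ij A_carr by (simp add: mat_delete_idx cpm_index[OF c] CA_idx)
qed

definition "C = char_poly A"
definition "D = minor_poly A 1 1"
definition "CS = char_poly A'"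
definition "DS = minor_poly A' (Suc N) 1"

lemma D_char: "D = char_poly (mat_delete A 0 0)"
  unfolding D_def minor_poly_def char_poly_def using minor11 by simp

lemma C_monic: "degree C = N \<and> coeff C N = 1"
  unfolding C_def using degree_monic_char_poly[OF A_carr] .

lemma D_monic: "degree D = N - 1 \<and> coeff D (N - 1) = 1"
  unfolding D_char using degree_monic_char_poly[OF mat_delete_carrier[OF A_carr]] .

definition "Q = mat_delete CA' N N"

lemma Q_carr: "Q \<in> carrier_mat N N" unfolding Q_def using mat_delete_carrier[OF CA'_carr] by simp

lemma Q_idx: "i < N \<Longrightarrow> j < N \<Longrightarrow> Q $$ (i, j) = CA' $$ (i, j)"
  unfolding Q_def using A'_carr by (simp add: mat_delete_idx)

lemma det_Q: "det Q = C + [:\<beta>:] * D"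
proof -
  have N0: "0 < N" using N2 by simp
  have cof: "cofactor Q 0 j = cofactor CA 0 j" if j: "j < N" for j
  proof -
    have "mat_delete Q 0 j = mat_delete CA 0 j"
    proof (rule eq_matI)
      show "dim_row (mat_delete Q 0 j) = dim_row (mat_delete CA 0 j)"
        "dim_col (mat_delete Q 0 j) = dim_col (mat_delete CA 0 j)" using Q_carr A_carr by auto
      fix a b assume "a < dim_row (mat_delete CA 0 j)" "b < dim_col (mat_delete CA 0 j)"
      then have ab: "a < N - 1" "b < N - 1" using A_carr by auto
      show "mat_delete Q 0 j $$ (a, b) = mat_delete CA 0 j $$ (a, b)"
        using ab Q_carr A_carr by (simp add: mat_delete_idx Q_idx CE1)
    qed
    then show ?thesis unfolding cofactor_def by simp
  qed
  have "det Q = (\<Sum>j<N. Q $$ (0, j) * cofactor Q 0 j)"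
    by (rule laplace_expansion_row[OF Q_carr N0])
  also have "\<dots> = (\<Sum>j<N. CA $$ (0, j) * cofactor CA 0 j + (if j = 0 then [:\<beta>:] * cofactor CA 0 0 else 0))"
    by (intro sum.cong refl) (simp add: Q_idx N0 CE0 cof distrib_right)
  also have "\<dots> = det CA + [:\<beta>:] * cofactor CA 0 0"
    using N0 by (simp add: sum.distrib laplace_expansion_row[OF CA_carr N0])
  also have "\<dots> = C + [:\<beta>:] * D"
    unfolding C_def D_def char_poly_def minor_poly_def cofactor_def by simp
  finally show ?thesis .
qed


definition "R = mat_delete CA' N 0"

lemma R_carr: "R \<in> carrier_mat N N" unfolding R_def using mat_delete_carrier[OF CA'_carr] by simp

lemma R_idx: "i < N \<Longrightarrow> j < N \<Longrightarrow> R $$ (i, j) = CA' $$ (i, Suc j)"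
  unfolding R_def using A'_carr by (simp add: mat_delete_idx)

lemma det_R: "DS = Polynomial.smult ((-1) ^ N * \<alpha>) D"
proof -
  have N1: "N - 1 < N" using N2 by simp
  have SN: "Suc (N - 1) = N" using N2 by simp
  have col: "R $$ (i, N - Suc 0) = (if i = 0 then [:- \<alpha>:] else 0)" if i: "i < N" for i
    using i N2 by (simp add: R_idx SN CA'_idx E3a E3b)
  have del: "mat_delete R 0 (N - 1) = mat_delete CA 0 0"
  proof (rule eq_matI)
    show "dim_row (mat_delete R 0 (N - 1)) = dim_row (mat_delete CA 0 0)"
      "dim_col (mat_delete R 0 (N - 1)) = dim_col (mat_delete CA 0 0)" using R_carr A_carr by auto
    fix a b assume "a < dim_row (mat_delete CA 0 0)" "b < dim_col (mat_delete CA 0 0)"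
    then have ab: "a < N - 1" "b < N - 1" using A_carr by auto
    show "mat_delete R 0 (N - 1) $$ (a, b) = mat_delete CA 0 0 $$ (a, b)"
      using ab R_carr A_carr by (simp add: mat_delete_idx R_idx CE1)
  qed
  have "det R = (\<Sum>i<N. R $$ (i, N - 1) * cofactor R i (N - 1))"
    by (rule laplace_expansion_column[OF R_carr N1])
  also have "\<dots> = (\<Sum>i<N. if i = 0 then [:- \<alpha>:] * cofactor R 0 (N - 1) else 0)"
    by (intro sum.cong refl) (simp add: col)
  also have "\<dots> = [:- \<alpha>:] * cofactor R 0 (N - 1)" using N2 by simp
  also have "\<dots> = [:- \<alpha>:] * ((-1) ^ (N - 1) * D)"
    unfolding cofactor_def del D_def minor_poly_def by simp
  also have "\<dots> = Polynomial.smult ((-1) ^ N * \<alpha>) D"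
  proof -
    have "(-1::real poly) ^ (N - 1) = [:(-1) ^ (N - 1):]" by (rule m1)
    moreover have "- ((-1::real) ^ (N - 1)) = (-1) ^ N" using SN by (metis mult_minus1 power_Suc)
    ultimately show ?thesis by (simp flip: \<open>- ((-1::real) ^ (N - 1)) = (-1) ^ N\<close>)
  qed
  finally show ?thesis unfolding DS_def minor_poly_def R_def by simp
qed

lemma det_CS: "CS = [:\<alpha>, 1:] * C + Polynomial.smult \<beta> (pCons 0 D)"
proof -
  have N0: "N < Suc N" by simp
  have row: "CA' $$ (N, j) = (if j = 0 then [:- \<beta>:] else if j = N then [:\<alpha>, 1:] else 0)" if j: "j < Suc N" for j
  proof -
    consider "j = 0" | "0 < j" "j < N" | "j = N" using j by linarith
    then show ?thesis
    proof cases
      case 1 then show ?thesis using N2 by (simp add: CA'_idx E2a)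
    next
      case 2 then show ?thesis by (simp add: CA'_idx E2b)
    next
      case 3 then show ?thesis using N2 by (simp add: CA'_idx E2c)
    qed
  qed
  have "CS = (\<Sum>j<Suc N. CA' $$ (N, j) * cofactor CA' N j)"
    unfolding CS_def char_poly_def by (rule laplace_expansion_row[OF CA'_carr N0])
  also have "\<dots> = (\<Sum>j\<in>{0, N}. CA' $$ (N, j) * cofactor CA' N j)"
    using N2 by (intro sum.mono_neutral_right) (auto simp: row)
  also have "\<dots> = [:- \<beta>:] * cofactor CA' N 0 + [:\<alpha>, 1:] * cofactor CA' N N"
    using N2 by (simp add: row)
  also have "cofactor CA' N 0 = (-1) ^ N * DS" unfolding cofactor_def DS_def minor_poly_def by simp
  also have "cofactor CA' N N = det Q" unfolding cofactor_def Q_def by (simp add: power_add flip: power_mult_distrib)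
  finally have "CS = [:- \<beta>:] * ((-1) ^ N * DS) + [:\<alpha>, 1:] * (C + [:\<beta>:] * D)" by (simp add: det_Q)
  also have "\<dots> = [:\<alpha>, 1:] * C + Polynomial.smult \<beta> (pCons 0 D)"
  proof -
    have sq: "((-1::real) ^ N) * ((-1) ^ N) = 1" by (simp flip: power_mult_distrib)
    have "[:- \<beta>:] * ((-1) ^ N * DS) = Polynomial.smult (- \<beta> * \<alpha>) D"
    proof -
      have "(-1) ^ N * \<alpha> * (-1) ^ N * \<beta> = ((-1::real) ^ N * (-1) ^ N) * (\<beta> * \<alpha>)" by (simp only: mult_ac)
      also have "\<dots> = \<beta> * \<alpha>" using sq by simp
      finally have sc: "(-1) ^ N * \<alpha> * (-1) ^ N * \<beta> = \<beta> * \<alpha>" .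
      have "[:- \<beta>:] * ((-1) ^ N * DS) = - Polynomial.smult ((-1) ^ N * \<alpha> * (-1) ^ N * \<beta>) D"
        unfolding det_R m1 by simp
      also have "\<dots> = - Polynomial.smult (\<beta> * \<alpha>) D" by (simp only: sc)
      finally show ?thesis by simp
    qed
    moreover have "[:\<alpha>, 1:] * (C + [:\<beta>:] * D) = [:\<alpha>, 1:] * C + Polynomial.smult (\<beta> * \<alpha>) D + Polynomial.smult \<beta> (pCons 0 D)"
    proof -
      have l: "[:\<alpha>, 1:] * q = Polynomial.smult \<alpha> q + pCons 0 q" for q :: "real poly" by simp
      have "[:\<alpha>, 1:] * (C + [:\<beta>:] * D) = [:\<alpha>, 1:] * C + Polynomial.smult \<beta> ([:\<alpha>, 1:] * D)"
        by (simp add: algebra_simps)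
      also have "\<dots> = [:\<alpha>, 1:] * C + Polynomial.smult (\<beta> * \<alpha>) D + Polynomial.smult \<beta> (pCons 0 D)"
        unfolding l by (simp add: smult_add_right)
      finally show ?thesis .
    qed
    ultimately show ?thesis by simp
  qed
  finally show ?thesis .
qed


lemma colsum: assumes noloop: "\<And>i. (i, i) \<notin> E" and c: "c < N"
  shows "(\<Sum>r<N. A $$ (r, c)) = 0"
proof -
  define j where "j = Suc c"
  define S where "S = {r. r < N \<and> r \<noteq> c \<and> (j, Suc r) \<in> E}"
  have split: "{..<N} = insert c ({..<N} - {c})" using c by auto
  have "(\<Sum>r<N. A $$ (r, c)) = A $$ (c, c) + (\<Sum>r\<in>{..<N} - {c}. A $$ (r, c))"
    by (subst split, subst sum.insert) auto
  also have "(\<Sum>r\<in>{..<N} - {c}. A $$ (r, c)) = (\<Sum>r\<in>{..<N} - {c}. if r \<in> S then p (j, Suc r) else 0)"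
    using c by (intro sum.cong refl) (auto simp: A_idx S_def j_def)
  also have "\<dots> = (\<Sum>r\<in>S. p (j, Suc r))"
    by (subst sum.If_cases) (auto simp: S_def intro!: sum.cong)
  also have "\<dots> = (\<Sum>k\<in>Suc ` S. p (j, k))" by (simp add: sum.reindex)
  also have "Suc ` S = {k. (j, k) \<in> E}"
  proof (safe)
    fix r assume "r \<in> S" then show "(j, Suc r) \<in> E" by (auto simp: S_def)
  next
    fix k assume k: "(j, k) \<in> E"
    then have "k \<in> {1..N}" "k \<noteq> j" using Esub noloop by auto
    then have "k - 1 \<in> S" "k = Suc (k - 1)" using k by (auto simp: S_def j_def)
    then show "k \<in> Suc ` S" by blast
  qed
  finally show ?thesis using c by (simp add: A_idx j_def)
qed

lemma C0: assumes noloop: "\<And>i. (i, i) \<notin> E" shows "coeff C 0 = 0"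
proof -
  have cm: "char_matrix A 0 = A" unfolding char_matrix_def using A_carr by auto
  have "coeff C 0 = det (- A)"
    unfolding C_def poly_0_coeff_0[symmetric] char_poly_matrix[OF A_carr] cm ..
  also have "det (- A) = det ((- A)\<^sup>T)" using A_carr by (simp add: det_transpose)
  also have "\<dots> = 0"
  proof -
    have carr: "(- A)\<^sup>T \<in> carrier_mat N N" using A_carr by simp
    have "((- A)\<^sup>T) *\<^sub>v (Matrix.vec N (\<lambda>_. 1)) = 0\<^sub>v N"
    proof (rule eq_vecI)
      fix i assume "i < dim_vec (0\<^sub>v N :: real Matrix.vec)"
      then have i: "i < N" by simp
      have "((- A)\<^sup>T *\<^sub>v Matrix.vec N (\<lambda>_. 1)) $ i = (\<Sum>r<N. - A $$ (r, i))"
        using i A_carr by (simp add: scalar_prod_def lessThan_atLeast0 row_def)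
      also have "\<dots> = - (\<Sum>r<N. A $$ (r, i))" by (simp add: sum_negf)
      also have "\<dots> = 0" using colsum[OF noloop i] by simp
      finally show "((- A)\<^sup>T *\<^sub>v Matrix.vec N (\<lambda>_. 1)) $ i = 0\<^sub>v N $ i" using i by simp
    qed (use A_carr in simp)
    moreover have "Matrix.vec N (\<lambda>_. 1::real) \<noteq> 0\<^sub>v N"
    proof
      assume "Matrix.vec N (\<lambda>_. 1::real) = 0\<^sub>v N"
      then have "Matrix.vec N (\<lambda>_. 1::real) $ 0 = 0\<^sub>v N $ 0" by simp
      then show False using N2 by simp
    qed
    moreover have "Matrix.vec N (\<lambda>_. 1::real) \<in> carrier_vec N" by simp
    ultimately show ?thesis using det_0_iff_vec_prod_zero_field[OF carr] by blast
  qed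
  finally show ?thesis .
qed

end



definition vJ :: "nat \<Rightarrow> (nat \<times> nat) set \<Rightarrow> nat set \<Rightarrow> params \<Rightarrow> nat \<times> nat \<Rightarrow> nat \<times> nat \<times> nat \<Rightarrow> real" where
  "vJ n E Leak p l k = deriv (\<lambda>t. io_coef n E Leak k (p(l := t))) (p l)"

lemma finite_io_keys: "finite In \<Longrightarrow> finite Out \<Longrightarrow> finite (io_keys n In Out)"
proof -
  assume f: "finite In" "finite Out"
  have "io_keys n In Out \<subseteq> Out \<times> (insert 0 In) \<times> {..n}" unfolding io_keys_def by auto
  then show ?thesis using f finite_subset by blast
qed

lemma jacobian_rank_frank:
  assumes "finite (lcm_params E Leak)" "finite In" "finite Out"
  shows "jacobian_rank n E In Out Leak p = frank (io_keys n In Out) (lcm_params E Leak) (vJ n E Leak p)"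
proof -
  define ks where "ks = sorted_list_of_set (nonconst_keys n E In Out Leak)"
  define es where "es = sorted_list_of_set (lcm_params E Leak)"
  have fk: "finite (nonconst_keys n E In Out Leak)"
    using finite_io_keys[OF assms(2,3)] unfolding nonconst_keys_def by simp
  have card: "card (nonconst_keys n E In Out Leak) = length ks" unfolding ks_def using fk by simp
  have "jacobian_rank n E In Out Leak p = vec_space.rank (length ks)
     (Matrix.mat (length ks) (length es) (\<lambda>(r, c). vJ n E Leak p (es ! c) (ks ! r)))"
    unfolding jacobian_rank_def coef_jacobian_def Let_def card ks_def[symmetric] es_def[symmetric] vJ_def ..
  also have "\<dots> = frank (set ks) (set es) (vJ n E Leak p)"
    by (rule rank_bridge) (auto simp: ks_def es_def)
  also have "\<dots> = frank (nonconst_keys n E In Out Leak) (lcm_params E Leak) (vJ n E Leak p)"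
    unfolding ks_def es_def using fk assms(1) by simp
  also have "\<dots> = frank (io_keys n In Out) (lcm_params E Leak) (vJ n E Leak p)"
  proof (rule frank_rows)
    show "nonconst_keys n E In Out Leak \<subseteq> io_keys n In Out" unfolding nonconst_keys_def by auto
  next
    fix l k assume k: "k \<in> io_keys n In Out - nonconst_keys n E In Out Leak"
    then have const: "\<And>q. io_coef n E Leak k q = io_coef n E Leak k p" unfolding nonconst_keys_def by auto
    have "(\<lambda>t. io_coef n E Leak k (p(l := t))) = (\<lambda>t. io_coef n E Leak k p)" using const by auto
    then show "vJ n E Leak p l k = 0" unfolding vJ_def by simp
  qed
  finally show ?thesis .
qed


lemma comp_matrix_cong:
  assumes "\<And>e. e \<in> E \<Longrightarrow> q e = q' e"
  shows "comp_matrix N E {} q = comp_matrix N E {} q'"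
  unfolding comp_matrix_def Let_def using assms
  by (intro cong_mat refl) (auto intro!: sum.cong)

lemma deriv_at: "PF f \<Longrightarrow> (f has_real_derivative deriv f x) (at x)" by (rule PF_deriv)

context
  fixes N :: nat and E :: "(nat \<times> nat) set"
  assumes N2: "N \<ge> 2" and Esub: "E \<subseteq> {1..N} \<times> {1..N}" and noloop: "\<And>i. (i, i) \<notin> E"
begin

lemma lf: "leaf N E" by unfold_locales (use N2 Esub in auto)

definition "HH = E \<union> {(1, Suc N), (Suc N, 1)}"
definition "cf q j = coeff (char_poly (comp_matrix N E {} q)) j"
definition "df q j = coeff (minor_poly (comp_matrix N E {} q) 1 1) j"
definition "csf q j = coeff (char_poly (comp_matrix (Suc N) HH {} q)) j"
definition "dsf q j = coeff (minor_poly (comp_matrix (Suc N) HH {} q) (Suc N) 1) j"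

lemma HH_eq: "leaf.H N E = HH" unfolding leaf.H_def[OF lf] HH_def ..

lemma cs_poly: "char_poly (comp_matrix (Suc N) HH {} q) =
   [:q (Suc N, 1), 1:] * char_poly (comp_matrix N E {} q) + Polynomial.smult (q (1, Suc N)) (pCons 0 (minor_poly (comp_matrix N E {} q) 1 1))"
  using leaf.det_CS[OF lf, where p=q]
  unfolding leaf.CS_def[OF lf] leaf.C_def[OF lf] leaf.D_def[OF lf] leaf.A_def[OF lf] leaf.A'_def[OF lf]
    leaf.\<alpha>_def[OF lf] leaf.\<beta>_def[OF lf] HH_eq .

lemma ds_poly: "minor_poly (comp_matrix (Suc N) HH {} q) (Suc N) 1 =
   Polynomial.smult ((-1) ^ N * q (Suc N, 1)) (minor_poly (comp_matrix N E {} q) 1 1)"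
  using leaf.det_R[OF lf, where p=q]
  unfolding leaf.DS_def[OF lf] leaf.D_def[OF lf] leaf.A_def[OF lf] leaf.A'_def[OF lf]
    leaf.\<alpha>_def[OF lf] HH_eq .

lemma cs_id: "csf q j = (if j = 0 then 0 else cf q (j - 1)) + q (Suc N, 1) * cf q j
    + q (1, Suc N) * (if j = 0 then 0 else df q (j - 1))"
  unfolding csf_def cf_def df_def cs_poly by (cases j) (auto simp: coeff_pCons)

lemma ds_id: "dsf q j = (-1) ^ N * q (Suc N, 1) * df q j"
  unfolding dsf_def df_def ds_poly by simp

lemma cf_indep: "l \<notin> E \<Longrightarrow> cf (q(l := t)) j = cf q j"
  unfolding cf_def by (subst comp_matrix_cong[of E "q(l := t)" q]) auto
lemma df_indep: "l \<notin> E \<Longrightarrow> df (q(l := t)) j = df q j"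
  unfolding df_def by (subst comp_matrix_cong[of E "q(l := t)" q]) auto

lemma cf_PF: "PF (\<lambda>t. cf (q(l := t)) j)"
  using PPF_char_poly[of N E "{}" q l] unfolding PPF_def cf_def by blast
lemma df_PF: "PF (\<lambda>t. df (q(l := t)) j)"
  using PPF_minor_poly[of N E "{}" q l 1 1] unfolding PPF_def df_def by blast

lemma cf_0: "cf q 0 = 0"
  using leaf.C0[OF lf noloop, where p=q] unfolding cf_def leaf.C_def[OF lf] leaf.A_def[OF lf] .
lemma cf_N: "cf q N = 1"
  using leaf.C_monic[OF lf, where p=q] unfolding cf_def leaf.C_def[OF lf] leaf.A_def[OF lf] by simp
lemma cf_big: "N < j \<Longrightarrow> cf q j = 0"
  using leaf.C_monic[OF lf, where p=q] unfolding cf_def leaf.C_def[OF lf] leaf.A_def[OF lf] by (simp add: coeff_eq_0)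
lemma df_N: "df q (N - 1) = 1"
  using leaf.D_monic[OF lf, where p=q] unfolding df_def leaf.D_def[OF lf] leaf.A_def[OF lf] by simp
lemma df_big: "N - 1 < j \<Longrightarrow> df q j = 0"
  using leaf.D_monic[OF lf, where p=q] unfolding df_def leaf.D_def[OF lf] leaf.A_def[OF lf] by (simp add: coeff_eq_0)


lemma io_M_c: "io_coef N E {} (1, 0, j) q = cf q j" unfolding io_coef_def cf_def by simp
lemma io_M_d: "io_coef N E {} (1, 1, j) q = df q j" unfolding io_coef_def df_def by simp
lemma io_M'_c: "io_coef (Suc N) HH {} (1, 0, j) q = csf q j" unfolding io_coef_def csf_def by simp
lemma io_M'_d: "io_coef (Suc N) HH {} (1, Suc N, j) q = q (Suc N, 1) * df q j"
proof -
  have "io_coef (Suc N) HH {} (1, Suc N, j) q = (-1) ^ (Suc (Suc N)) * dsf q j"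
    unfolding io_coef_def dsf_def by simp
  also have "\<dots> = ((-1) ^ N * (-1) ^ N) * q (Suc N, 1) * df q j" unfolding ds_id by (simp add: algebra_simps)
  also have "(-1::real) ^ N * (-1) ^ N = 1" by (simp flip: power_mult_distrib)
  finally show ?thesis by simp
qed

definition "dC p l j = deriv (\<lambda>t. cf (p(l := t)) j) (p l)"
definition "dD p l j = deriv (\<lambda>t. df (p(l := t)) j) (p l)"

lemma dC_has: "((\<lambda>t. cf (p(l := t)) j) has_real_derivative dC p l j) (at (p l))"
  unfolding dC_def by (rule PF_deriv[OF cf_PF])
lemma dD_has: "((\<lambda>t. df (p(l := t)) j) has_real_derivative dD p l j) (at (p l))"
  unfolding dD_def by (rule PF_deriv[OF df_PF])

lemma dC_const: "j = 0 \<or> N \<le> j \<Longrightarrow> dC p l j = 0"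
proof -
  assume j: "j = 0 \<or> N \<le> j"
  have "(\<lambda>t. cf (p(l := t)) j) = (\<lambda>t. if j = N then 1 else 0)"
    using j cf_0 cf_N cf_big N2 by (auto simp: fun_eq_iff)
  then show ?thesis unfolding dC_def by simp
qed

lemma dD_const: "N - 1 \<le> j \<Longrightarrow> dD p l j = 0"
proof -
  assume j: "N - 1 \<le> j"
  have "(\<lambda>t. df (p(l := t)) j) = (\<lambda>t. if j = N - 1 then 1 else 0)"
    using j df_N df_big by (auto simp: fun_eq_iff)
  then show ?thesis unfolding dD_def by simp
qed

lemma notinE: "(Suc N, 1) \<notin> E" "(1, Suc N) \<notin> E" using Esub by auto

lemma vJ_M_c: "vJ N E {} p l (1, 0, j) = dC p l j"
  unfolding vJ_def io_M_c dC_def ..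
lemma vJ_M_d: "vJ N E {} p l (1, 1, j) = dD p l j"
  unfolding vJ_def io_M_d dD_def ..

lemma vJ_M'_c_E: assumes l: "l \<in> E"
  shows "vJ (Suc N) HH {} p l (1, 0, j) = (if j = 0 then 0 else dC p l (j - 1)) + p (Suc N, 1) * dC p l j
      + p (1, Suc N) * (if j = 0 then 0 else dD p l (j - 1))"
proof -
  have l1: "l \<noteq> (Suc N, 1)" "l \<noteq> (1, Suc N)" using l notinE by auto
  have f: "(\<lambda>t. io_coef (Suc N) HH {} (1, 0, j) (p(l := t))) = (\<lambda>t. (if j = 0 then 0 else cf (p(l := t)) (j - 1))
     + p (Suc N, 1) * cf (p(l := t)) j + p (1, Suc N) * (if j = 0 then 0 else df (p(l := t)) (j - 1)))"
    unfolding io_M'_c cs_id using l1 by simp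
  have "((\<lambda>t. (if j = 0 then 0 else cf (p(l := t)) (j - 1))
     + p (Suc N, 1) * cf (p(l := t)) j + p (1, Suc N) * (if j = 0 then 0 else df (p(l := t)) (j - 1)))
     has_real_derivative (if j = 0 then 0 else dC p l (j - 1)) + p (Suc N, 1) * dC p l j
      + p (1, Suc N) * (if j = 0 then 0 else dD p l (j - 1))) (at (p l))"
  proof (cases "j = 0")
    case True then show ?thesis by (auto intro!: derivative_eq_intros dC_has)
  next
    case False then show ?thesis by (auto intro!: derivative_eq_intros dC_has dD_has)
  qed
  then show ?thesis unfolding vJ_def f by (rule DERIV_imp_deriv)
qed

lemma vJ_M'_d_E: assumes l: "l \<in> E"
  shows "vJ (Suc N) HH {} p l (1, Suc N, j) = p (Suc N, 1) * dD p l j"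
proof -
  have l1: "l \<noteq> (Suc N, 1)" using l notinE by auto
  have f: "(\<lambda>t. io_coef (Suc N) HH {} (1, Suc N, j) (p(l := t))) = (\<lambda>t. p (Suc N, 1) * df (p(l := t)) j)"
    unfolding io_M'_d using l1 by simp
  have "((\<lambda>t. p (Suc N, 1) * df (p(l := t)) j) has_real_derivative p (Suc N, 1) * dD p l j) (at (p l))"
    by (auto intro!: derivative_eq_intros dD_has)
  then show ?thesis unfolding vJ_def f by (rule DERIV_imp_deriv)
qed

lemma vJ_M'_c_y: "vJ (Suc N) HH {} p (Suc N, 1) (1, 0, j) = cf p j"
proof -
  have f: "(\<lambda>t. io_coef (Suc N) HH {} (1, 0, j) (p((Suc N, 1) := t))) = (\<lambda>t. (if j = 0 then 0 else cf p (j - 1))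
     + t * cf p j + p (1, Suc N) * (if j = 0 then 0 else df p (j - 1)))"
    unfolding io_M'_c cs_id using notinE N2 by (simp add: cf_indep df_indep)
  have "((\<lambda>t. (if j = 0 then 0 else cf p (j - 1))
     + t * cf p j + p (1, Suc N) * (if j = 0 then 0 else df p (j - 1))) has_real_derivative cf p j) (at (p (Suc N, 1)))"
    by (auto intro!: derivative_eq_intros)
  then show ?thesis unfolding vJ_def f by (rule DERIV_imp_deriv)
qed

lemma vJ_M'_d_y: "vJ (Suc N) HH {} p (Suc N, 1) (1, Suc N, j) = df p j"
proof -
  have f: "(\<lambda>t. io_coef (Suc N) HH {} (1, Suc N, j) (p((Suc N, 1) := t))) = (\<lambda>t. t * df p j)"
    unfolding io_M'_d using notinE by (simp add: df_indep)
  have "((\<lambda>t. t * df p j) has_real_derivative df p j) (at (p (Suc N, 1)))"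
    by (auto intro!: derivative_eq_intros)
  then show ?thesis unfolding vJ_def f by (rule DERIV_imp_deriv)
qed

lemma vJ_M'_c_x: "vJ (Suc N) HH {} p (1, Suc N) (1, 0, j) = (if j = 0 then 0 else df p (j - 1))"
proof -
  have f: "(\<lambda>t. io_coef (Suc N) HH {} (1, 0, j) (p((1, Suc N) := t))) = (\<lambda>t. (if j = 0 then 0 else cf p (j - 1))
     + p (Suc N, 1) * cf p j + t * (if j = 0 then 0 else df p (j - 1)))"
    unfolding io_M'_c cs_id using notinE N2 by (simp add: cf_indep df_indep)
  have "((\<lambda>t. (if j = 0 then 0 else cf p (j - 1))
     + p (Suc N, 1) * cf p j + t * (if j = 0 then 0 else df p (j - 1))) has_real_derivative (if j = 0 then 0 else df p (j - 1))) (at (p (1, Suc N)))"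
    by (auto intro!: derivative_eq_intros)
  then show ?thesis unfolding vJ_def f by (rule DERIV_imp_deriv)
qed

lemma vJ_M'_d_x: "vJ (Suc N) HH {} p (1, Suc N) (1, Suc N, j) = 0"
proof -
  have f: "(\<lambda>t. io_coef (Suc N) HH {} (1, Suc N, j) (p((1, Suc N) := t))) = (\<lambda>t. p (Suc N, 1) * df p j)"
    unfolding io_M'_d using notinE N2 by (simp add: df_indep)
  show ?thesis unfolding vJ_def f by simp
qed


definition "KM = io_keys N {1} {1}"
definition "KM' = io_keys (Suc N) {Suc N} {1}"

lemma KM_iff: "k \<in> KM \<longleftrightarrow> (\<exists>j. k = (1, 0, j) \<and> j \<le> N) \<or> (\<exists>j. k = (1, 1, j) \<and> j < N)"
  unfolding KM_def io_keys_def by auto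
lemma KM'_iff: "k \<in> KM' \<longleftrightarrow> (\<exists>j. k = (1, 0, j) \<and> j \<le> Suc N) \<or> (\<exists>j. k = (1, Suc N, j) \<and> j < Suc N)"
  unfolding KM'_def io_keys_def by auto

lemma HH_un: "HH = E \<union> {(1, Suc N), (Suc N, 1)}" unfolding HH_def ..

lemma finE: "finite E" using Esub finite_subset by (metis finite_SigmaI finite_atLeastAtMost)

lemma sum_Mc: "(\<Sum>l\<in>I. c l * vJ N E {} p l (1, 0, j)) = (\<Sum>l\<in>I. c l * dC p l j)"
  unfolding vJ_M_c ..
lemma sum_Md: "(\<Sum>l\<in>I. c l * vJ N E {} p l (1, 1, j)) = (\<Sum>l\<in>I. c l * dD p l j)"
  unfolding vJ_M_d ..
lemma sum_M'c: "I \<subseteq> E \<Longrightarrow> (\<Sum>l\<in>I. c l * vJ (Suc N) HH {} p l (1, 0, j)) =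
   (if j = 0 then 0 else (\<Sum>l\<in>I. c l * dC p l (j - 1))) + p (Suc N, 1) * (\<Sum>l\<in>I. c l * dC p l j)
   + p (1, Suc N) * (if j = 0 then 0 else (\<Sum>l\<in>I. c l * dD p l (j - 1)))"
proof -
  assume I: "I \<subseteq> E"
  have "(\<Sum>l\<in>I. c l * vJ (Suc N) HH {} p l (1, 0, j)) = (\<Sum>l\<in>I. c l * ((if j = 0 then 0 else dC p l (j - 1)) + p (Suc N, 1) * dC p l j
      + p (1, Suc N) * (if j = 0 then 0 else dD p l (j - 1))))"
    using I by (intro sum.cong refl) (auto simp: vJ_M'_c_E[simplified])
  then show ?thesis
    by (cases "j = 0") (simp_all add: sum.distrib sum_distrib_left algebra_simps)
qed

lemma sum_M'd: "I \<subseteq> E \<Longrightarrow> (\<Sum>l\<in>I. c l * vJ (Suc N) HH {} p l (1, Suc N, j)) =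
   p (Suc N, 1) * (\<Sum>l\<in>I. c l * dD p l j)"
proof -
  assume I: "I \<subseteq> E"
  have "(\<Sum>l\<in>I. c l * vJ (Suc N) HH {} p l (1, Suc N, j)) = (\<Sum>l\<in>I. c l * (p (Suc N, 1) * dD p l j))"
    using I by (intro sum.cong refl) (auto simp: vJ_M'_d_E[simplified])
  then show ?thesis by (simp add: sum_distrib_left algebra_simps)
qed

lemma SC_const: "j = 0 \<or> N \<le> j \<Longrightarrow> (\<Sum>l\<in>I. c l * dC p l j) = 0"
  by (simp add: dC_const)
lemma SD_const: "N - 1 \<le> j \<Longrightarrow> (\<Sum>l\<in>I. c l * dD p l j) = 0"
  by (simp add: dD_const)

lemma upper: "frank KM' HH (vJ (Suc N) HH {} p) \<le> frank KM E (vJ N E {} p) + 2"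
proof -
  have xy: "card {(1, Suc N), (Suc N, 1)} = 2" using N2 by simp
  have "frank KM' (E \<union> {(1, Suc N), (Suc N, 1)}) (vJ (Suc N) HH {} p) \<le> frank KM E (vJ N E {} p) + card {(1, Suc N), (Suc N, 1)}"
  proof (rule frank_upper[OF finE])
    fix I c assume I: "I \<subseteq> E" and h: "\<forall>k\<in>KM. (\<Sum>l\<in>I. c l * vJ N E {} p l k) = 0"
    have SC: "(\<Sum>l\<in>I. c l * dC p l j) = 0" for j
    proof (cases "j \<le> N")
      case True then have "(1, 0, j) \<in> KM" by (simp add: KM_iff)
      then show ?thesis using h sum_Mc by metis
    qed (simp add: SC_const)
    have SD: "(\<Sum>l\<in>I. c l * dD p l j) = 0" for j
    proof (cases "j < N")
      case True then have "(1, 1, j) \<in> KM" by (simp add: KM_iff)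
      then show ?thesis using h sum_Md by metis
    qed (simp add: SD_const)
    show "\<forall>k\<in>KM'. (\<Sum>l\<in>I. c l * vJ (Suc N) HH {} p l k) = 0"
      using I by (auto simp: KM'_iff sum_M'c[simplified] sum_M'd[simplified] SC SD)
  qed simp
  then show ?thesis unfolding HH_un[symmetric] xy .
qed


lemma lower:
  assumes al: "p (Suc N, 1) \<noteq> 0"
    and rt: "poly (minor_poly (comp_matrix N E {} p) 1 1) (- p (Suc N, 1)) \<noteq> 0"
  shows "frank KM E (vJ N E {} p) + 2 \<le> frank KM' HH (vJ (Suc N) HH {} p)"
proof -
  obtain I where I: "I \<subseteq> E" "indep KM I (vJ N E {} p)" "card I = frank KM E (vJ N E {} p)"
    using frank_obtain[OF finE] by metis
  define \<alpha> where "\<alpha> = p (Suc N, 1)"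
  have xy: "(1, Suc N) \<notin> E" "(Suc N, 1) \<notin> E" "(1, Suc N) \<noteq> (Suc N, 1)" using notinE N2 by auto
  have "card I + 2 \<le> frank KM' (E \<union> {(1, Suc N), (Suc N, 1)}) (vJ (Suc N) HH {} p)"
  proof (rule frank_lower[OF finE xy I(1,2)])
    fix c a b
    assume h: "\<forall>k\<in>KM'. (\<Sum>l\<in>I. c l * vJ (Suc N) HH {} p l k) + a * vJ (Suc N) HH {} p (1, Suc N) k
        + b * vJ (Suc N) HH {} p (Suc N, 1) k = 0"
    define SC where "SC j = (\<Sum>l\<in>I. c l * dC p l j)" for j
    define SD where "SD j = (\<Sum>l\<in>I. c l * dD p l j)" for j
    have hd: "\<alpha> * SD j + b * df p j = 0" if j: "j < Suc N" for j
    proof -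
      have "(1, Suc N, j) \<in> KM'" using j by (simp add: KM'_iff)
      then show ?thesis using h sum_M'd[OF I(1)] vJ_M'_d_x vJ_M'_d_y unfolding SD_def \<alpha>_def by fastforce
    qed
    have b0: "b = 0"
    proof -
      have "\<alpha> * SD (N - 1) + b * df p (N - 1) = 0" using hd N2 by simp
      moreover have "SD (N - 1) = 0" unfolding SD_def by (rule SD_const) simp
      ultimately show ?thesis using df_N by simp
    qed
    have SD0: "SD j = 0" for j
    proof (cases "j < Suc N")
      case True then show ?thesis using hd[OF True] b0 al unfolding \<alpha>_def by simp
    next
      case False then show ?thesis unfolding SD_def by (intro SD_const) simp
    qed
    have hc: "(if j = 0 then 0 else SC (j - 1)) + \<alpha> * SC j + a * (if j = 0 then 0 else df p (j - 1)) = 0"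
      if j: "j \<le> Suc N" for j
    proof -
      have "(1, 0, j) \<in> KM'" using j by (simp add: KM'_iff)
      then have "(\<Sum>l\<in>I. c l * vJ (Suc N) HH {} p l (1, 0, j)) + a * vJ (Suc N) HH {} p (1, Suc N) (1, 0, j)
        + b * vJ (Suc N) HH {} p (Suc N, 1) (1, 0, j) = 0" using h by blast
      then show ?thesis unfolding sum_M'c[OF I(1)] vJ_M'_c_x vJ_M'_c_y b0
        using SD0 unfolding SC_def SD_def \<alpha>_def by (cases "j = 0") simp_all
    qed
    define G where "G = Poly (map SC [0..<N])"
    have cG: "coeff G j = SC j" for j
    proof (cases "j < N")
      case True then show ?thesis unfolding G_def by (simp add: nth_default_def)
    next
      case False then show ?thesis unfolding G_def SC_def
        by (simp add: nth_default_def SC_const)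
    qed
    define Dp where "Dp = minor_poly (comp_matrix N E {} p) 1 1"
    have cD: "coeff Dp j = df p j" for j unfolding Dp_def df_def ..
    define P where "P = [:\<alpha>, 1:] * G + Polynomial.smult a (pCons 0 Dp)"
    have cP: "coeff P j = \<alpha> * SC j + (if j = 0 then 0 else SC (j - 1)) + a * (if j = 0 then 0 else df p (j - 1))" for j
      unfolding P_def by (cases j) (simp_all add: cG cD coeff_pCons)
    have P0: "P = 0"
    proof (rule poly_eqI)
      fix j
      show "coeff P j = coeff 0 j"
      proof (cases "j \<le> Suc N")
        case True then show ?thesis using hc[OF True] unfolding cP by simp
      next
        case False
        then have "SC j = 0" "SC (j - 1) = 0" "df p (j - 1) = 0"
          unfolding SC_def using SC_const df_big by auto
        then show ?thesis unfolding cP by simp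
      qed
    qed
    have "poly P (- \<alpha>) = - \<alpha> * a * poly Dp (- \<alpha>)" unfolding P_def by simp
    then have a0: "a = 0" using P0 al rt unfolding \<alpha>_def Dp_def by simp
    have "[:\<alpha>, 1:] * G = 0" using P0 a0 unfolding P_def by simp
    moreover have "[:\<alpha>, 1:] \<noteq> (0::real poly)" by simp
    ultimately have "G = 0" using mult_eq_0_iff by blast
    then have SC0: "SC j = 0" for j using cG[of j] by simp
    show "a = 0 \<and> b = 0 \<and> (\<forall>k\<in>KM. (\<Sum>l\<in>I. c l * vJ N E {} p l k) = 0)"
      using a0 b0 SC0 SD0 unfolding SC_def SD_def by (auto simp: KM_iff sum_Mc[simplified] sum_Md[simplified])
  qed
  then show ?thesis unfolding HH_un[symmetric] I(3) .
qed

end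

lemma frank_cong:
  assumes "\<And>l k. l \<in> L \<Longrightarrow> v l k = v' l k"
  shows "frank K L v = frank K L v'"
proof -
  have "indep K I v = indep K I v'" if "I \<subseteq> L" for I
    unfolding indep_def using assms that by (simp add: subset_iff cong: sum.cong)
  then have "{card I | I. I \<subseteq> L \<and> indep K I v} = {card I | I. I \<subseteq> L \<and> indep K I v'}" by blast
  then show ?thesis unfolding frank_def by simp
qed

theorem proposition4p15:
  fixes n :: nat and E :: "(nat \<times> nat) set"
  assumes n3: "n \<ge> 3"
    and G: "lcm_graph (n - 1) E"
    and sc: "strongly_connected (n - 1) E"
  defines "H \<equiv> add_leaf_edge n E 1"
  shows
   "(\<forall>p :: params.
      let A = comp_matrix (n - 1) E {} p; A' = comp_matrix n H {} p;
          c = (\<lambda>i. coeff (char_poly A) i);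
          d = (\<lambda>i. coeff (minor_poly A 1 1) i);
          cs = (\<lambda>i. coeff (char_poly A') i);
          ds = (\<lambda>i. coeff (minor_poly A' n 1) i);
          a1n = p (n, 1); an1 = p (1, n)
      in (\<forall>i \<le> n - 2. ds i = (-1) ^ (n - 1) * a1n * d i)
       \<and> (\<forall>i\<in>{1..n - 1}. cs i = c (i - 1) + a1n * c i + an1 * d (i - 1))
       \<and> cs 0 = 0 \<and> c 0 = 0)
    \<and> generic_jacobian_rank n H {n} {1} {} = generic_jacobian_rank (n - 1) E {1} {1} {} + 2"
proof -
  define N where "N = n - 1"
  have nN: "n = Suc N" using n3 unfolding N_def by simp
  have N2: "N \<ge> 2" using n3 unfolding N_def by simp
  have Esub: "E \<subseteq> {1..N} \<times> {1..N}" and noloop: "\<And>i. (i, i) \<notin> E"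
    using G unfolding lcm_graph_def N_def by auto
  note ctx = N2 Esub noloop
  have HH: "H = HH N E" unfolding H_def add_leaf_edge_def HH_def[OF ctx] nN ..
  have part1: "\<forall>p :: params.
      let A = comp_matrix (n - 1) E {} p; A' = comp_matrix n H {} p;
          c = (\<lambda>i. coeff (char_poly A) i);
          d = (\<lambda>i. coeff (minor_poly A 1 1) i);
          cs = (\<lambda>i. coeff (char_poly A') i);
          ds = (\<lambda>i. coeff (minor_poly A' n 1) i);
          a1n = p (n, 1); an1 = p (1, n)
      in (\<forall>i \<le> n - 2. ds i = (-1) ^ (n - 1) * a1n * d i)
       \<and> (\<forall>i\<in>{1..n - 1}. cs i = c (i - 1) + a1n * c i + an1 * d (i - 1))
       \<and> cs 0 = 0 \<and> c 0 = 0"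
  proof
    fix p :: params
    have ds: "dsf N E p i = (-1) ^ N * p (Suc N, 1) * df N E p i" for i by (rule ds_id[OF ctx])
    have cs: "csf N E p i = cf N E p (i - 1) + p (Suc N, 1) * cf N E p i + p (1, Suc N) * df N E p (i - 1)" if "i \<ge> 1" for i
      using cs_id[OF ctx, of p i] that by simp
    have cs0: "csf N E p 0 = 0" using cs_id[OF ctx, of p 0] cf_0[OF ctx, of p] by simp
    have c0: "cf N E p 0 = 0" by (rule cf_0[OF ctx])
    show "let A = comp_matrix (n - 1) E {} p; A' = comp_matrix n H {} p;
          c = (\<lambda>i. coeff (char_poly A) i);
          d = (\<lambda>i. coeff (minor_poly A 1 1) i);
          cs = (\<lambda>i. coeff (char_poly A') i);
          ds = (\<lambda>i. coeff (minor_poly A' n 1) i);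
          a1n = p (n, 1); an1 = p (1, n)
      in (\<forall>i \<le> n - 2. ds i = (-1) ^ (n - 1) * a1n * d i)
       \<and> (\<forall>i\<in>{1..n - 1}. cs i = c (i - 1) + a1n * c i + an1 * d (i - 1))
       \<and> cs 0 = 0 \<and> c 0 = 0"
      unfolding Let_def HH N_def[symmetric] nN
      using ds cs cs0 c0 unfolding cf_def[OF ctx] df_def[OF ctx] csf_def[OF ctx] dsf_def[OF ctx] by auto
  qed
  define f where "f p = frank (KM N) E (vJ N E {} p)" for p
  define g where "g p = frank (KM' N) (HH N E) (vJ (Suc N) (HH N E) {} p)" for p
  have finE: "finite E" by (rule finE[OF ctx])
  have finH: "finite (HH N E)" unfolding HH_def[OF ctx] using finE by simp
  have jf: "jacobian_rank (n - 1) E {1} {1} {} p = f p" for p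
    unfolding f_def KM_def[OF ctx] N_def[symmetric] using jacobian_rank_frank[of E "{}" "{1}" "{1}" N p] finE
    by (simp add: lcm_params_def)
  have jg: "jacobian_rank n H {n} {1} {} p = g p" for p
    unfolding g_def KM'_def[OF ctx] HH nN using jacobian_rank_frank[of "HH N E" "{}" "{Suc N}" "{1}" "Suc N" p] finH
    by (simp add: lcm_params_def)
  have rf: "range f \<subseteq> {..card E}" unfolding f_def using frank_le_card[OF finE] by auto
  have rg: "range g \<subseteq> {..card (HH N E)}" unfolding g_def using frank_le_card[OF finH] by auto
  have finf: "finite (range f)" using rf finite_subset by blast
  have fing: "finite (range g)" using rg finite_subset by blast
  have upper_all: "g p \<le> Max (range f) + 2" for p
  proof -
    have "g p \<le> f p + 2" unfolding f_def g_def by (rule upper[OF ctx])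
    also have "f p \<le> Max (range f)" using finf by simp
    finally show ?thesis by simp
  qed
  have le: "Max (range g) \<le> Max (range f) + 2"
    using fing upper_all by (simp add: Max_le_iff)
  obtain p0 where p0: "f p0 = Max (range f)"
    using Max_in[OF finf] by auto
  define Dp where "Dp = minor_poly (comp_matrix N E {} p0) 1 1"
  have Dnz: "Dp \<noteq> 0" using df_N[OF ctx, of p0] unfolding df_def[OF ctx] Dp_def by auto
  have finS: "finite (insert 0 (uminus ` {x. poly Dp x = 0}))"
    using poly_roots_finite[OF Dnz] by simp
  obtain \<alpha> :: real where \<alpha>: "\<alpha> \<notin> insert 0 (uminus ` {x. poly Dp x = 0})"
    using ex_new_if_finite[OF infinite_UNIV_char_0 finS] by blast
  define ps where "ps = p0((Suc N, 1) := \<alpha>)"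
  have notin: "(Suc N, 1) \<notin> E" using Esub by auto
  have agree: "\<And>e. e \<in> E \<Longrightarrow> ps e = p0 e" unfolding ps_def using notin by auto
  have cmeq: "comp_matrix N E {} (ps(l := t)) = comp_matrix N E {} (p0(l := t))" for l t
    by (rule comp_matrix_cong) (use agree in auto)
  have fps: "f ps = f p0"
    unfolding f_def
  proof (rule frank_cong)
    fix l k assume l: "l \<in> E"
    show "vJ N E {} ps l k = vJ N E {} p0 l k"
      unfolding vJ_def io_coef_def cmeq using agree[OF l] by simp
  qed
  have a0: "ps (Suc N, 1) \<noteq> 0" using \<alpha> unfolding ps_def by auto
  have rt: "poly (minor_poly (comp_matrix N E {} ps) 1 1) (- ps (Suc N, 1)) \<noteq> 0"
  proof -
    have "comp_matrix N E {} ps = comp_matrix N E {} p0" by (rule comp_matrix_cong) (use agree in auto)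
    moreover have "poly Dp (- \<alpha>) \<noteq> 0" using \<alpha> by (auto simp: image_iff)
    ultimately show ?thesis unfolding Dp_def ps_def by simp
  qed
  have "Max (range f) + 2 \<le> g ps"
    using lower[OF ctx a0 rt] fps p0 unfolding f_def g_def by simp
  also have "g ps \<le> Max (range g)" using fing by simp
  finally have ge: "Max (range f) + 2 \<le> Max (range g)" .
  have "generic_jacobian_rank n H {n} {1} {} = Max (range g)"
    unfolding generic_jacobian_rank_def using jg by (metis (no_types) ext)
  moreover have "generic_jacobian_rank (n - 1) E {1} {1} {} = Max (range f)"
    unfolding generic_jacobian_rank_def using jf by (metis (no_types) ext)
  ultimately show ?thesis using part1 le ge by simp
qed


end
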